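(* Suppose the weights are $w_i=z_i\|\phi_i\|_{L^\infty}$ for some $z_i\ge1$, $i\in\mathbb N$. Then for all $M,R\in\mathbb N$, $$F(h,M,R)\le\frac{\sqrt M\sqrt{1+E(h,M)}}{\inf_{i>R}\{z_i\}}.$$
   Context: Setting: $D\subseteq\mathbb R^d$ a domain, $\nu\ge0$ integrable on $D$ with $\int_D\nu=1$, $\{\phi_i\}_{i\in\mathbb N}\subseteq L^2_\nu(D)\cap L^\infty(D)$ orthonormal in $L^2_\nu(D)$. $T=\{t_n\}_{n=1}^N\subseteq\overline D$ with density $h=\sup_{t\in D}\min_n|t-t_n|$, Voronoi cells $V_n=\{t\in D:|t-t_n|\le|t-t_m|\ \forall m\ne n\}$ and quadrature weights $\tau_n=\int_{V_n}\nu$. $U$ is the $N\times\infty$ matrix $U_{n,i}=\sqrt{\tau_n}\phi_i(t_n)$; $W=\mathrm{diag}(w_1,w_2,\dots)$. $P_M$ is the projection onto the first $M$ coordinates, $P_R^\perp=I-P_R$. Define $E_2(h,M)=\|P_M-P_MU^*UP_M\|$ ($\ell^2$ operator norm), $E_\infty(h,M)=\|P_M-P_MU^*UP_M\|_\infty$ ($\ell^\infty$ operator norm), $E(h,M)=\max\{E_2(h,M),E_\infty(h,M)\}$ and $F(h,M,R)=\|P_R^\perp W^{-1}U^*UP_M\|_\infty$; these depend on the point set $T$. *)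

theory Defs
  imports "HOL-Analysis.Analysis"
begin

text \<open>Points t 0, ..., t (N-1) (0-based); coordinates i :: nat are 0-based, so
  P_M projects onto indices {..<M} and P_R^perp onto indices {R..}.\<close>

definition voronoi_cell :: "'a::euclidean_space set \<Rightarrow> (nat \<Rightarrow> 'a) \<Rightarrow> nat \<Rightarrow> nat \<Rightarrow> 'a set" where
  "voronoi_cell D t N n = {s \<in> D. \<forall>m<N. m \<noteq> n \<longrightarrow> dist s (t n) \<le> dist s (t m)}"

definition quad_weight :: "'a::euclidean_space set \<Rightarrow> ('a \<Rightarrow> real) \<Rightarrow> (nat \<Rightarrow> 'a) \<Rightarrow> nat \<Rightarrow> nat \<Rightarrow> real" where
  "quad_weight D \<nu> t N n = (LINT s:voronoi_cell D t N n|lebesgue. \<nu> s)"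

definition Umat :: "'a::euclidean_space set \<Rightarrow> ('a \<Rightarrow> real) \<Rightarrow> (nat \<Rightarrow> 'a \<Rightarrow> real) \<Rightarrow> (nat \<Rightarrow> 'a) \<Rightarrow> nat \<Rightarrow> nat \<Rightarrow> nat \<Rightarrow> real" where
  "Umat D \<nu> \<phi> t N n i = sqrt (quad_weight D \<nu> t N n) * \<phi> i (t n)"

definition gram :: "'a::euclidean_space set \<Rightarrow> ('a \<Rightarrow> real) \<Rightarrow> (nat \<Rightarrow> 'a \<Rightarrow> real) \<Rightarrow> (nat \<Rightarrow> 'a) \<Rightarrow> nat \<Rightarrow> nat \<Rightarrow> nat \<Rightarrow> real" where
  "gram D \<nu> \<phi> t N i j = (\<Sum>n<N. Umat D \<nu> \<phi> t N n i * Umat D \<nu> \<phi> t N n j)"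

definition l2_opnorm :: "nat \<Rightarrow> (nat \<Rightarrow> nat \<Rightarrow> real) \<Rightarrow> real" where
  "l2_opnorm M A = Sup {sqrt (\<Sum>i<M. (\<Sum>j<M. A i j * x j)\<^sup>2) | x. (\<Sum>j<M. (x j)\<^sup>2) \<le> 1}"

definition linf_opnorm :: "nat \<Rightarrow> (nat \<Rightarrow> nat \<Rightarrow> real) \<Rightarrow> real" where
  "linf_opnorm M A = Max (insert 0 {\<Sum>j<M. \<bar>A i j\<bar> | i. i < M})"

definition E2 :: "'a::euclidean_space set \<Rightarrow> ('a \<Rightarrow> real) \<Rightarrow> (nat \<Rightarrow> 'a \<Rightarrow> real) \<Rightarrow> (nat \<Rightarrow> 'a) \<Rightarrow> nat \<Rightarrow> nat \<Rightarrow> real" where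
  "E2 D \<nu> \<phi> t N M = l2_opnorm M (\<lambda>i j. (if i = j then 1 else 0) - gram D \<nu> \<phi> t N i j)"

definition Einf :: "'a::euclidean_space set \<Rightarrow> ('a \<Rightarrow> real) \<Rightarrow> (nat \<Rightarrow> 'a \<Rightarrow> real) \<Rightarrow> (nat \<Rightarrow> 'a) \<Rightarrow> nat \<Rightarrow> nat \<Rightarrow> real" where
  "Einf D \<nu> \<phi> t N M = linf_opnorm M (\<lambda>i j. (if i = j then 1 else 0) - gram D \<nu> \<phi> t N i j)"

definition Eerr :: "'a::euclidean_space set \<Rightarrow> ('a \<Rightarrow> real) \<Rightarrow> (nat \<Rightarrow> 'a \<Rightarrow> real) \<Rightarrow> (nat \<Rightarrow> 'a) \<Rightarrow> nat \<Rightarrow> nat \<Rightarrow> real" where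
  "Eerr D \<nu> \<phi> t N M = max (E2 D \<nu> \<phi> t N M) (Einf D \<nu> \<phi> t N M)"

text \<open>F = l^infinity operator norm (max absolute row sum, possibly infinite) of
  P_R^perp W^{-1} U^* U P_M.\<close>
definition Ferr :: "'a::euclidean_space set \<Rightarrow> ('a \<Rightarrow> real) \<Rightarrow> (nat \<Rightarrow> 'a \<Rightarrow> real) \<Rightarrow> (nat \<Rightarrow> 'a) \<Rightarrow> nat \<Rightarrow> (nat \<Rightarrow> real) \<Rightarrow> nat \<Rightarrow> nat \<Rightarrow> ereal" where
  "Ferr D \<nu> \<phi> t N w M R = (SUP i\<in>{R..}. ereal (\<Sum>j<M. \<bar>gram D \<nu> \<phi> t N i j / w i\<bar>))"

text \<open>Sup norm, taken over the closure of D (where the points live).\<close>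
definition linf_norm :: "'a::euclidean_space set \<Rightarrow> ('a \<Rightarrow> real) \<Rightarrow> real" where
  "linf_norm D f = (SUP s\<in>closure D. \<bar>f s\<bar>)"

end

theory Submission
  imports Defs "HOL-Analysis.Analysis"
begin

lemma cs_sum:
  fixes f g :: "'b \<Rightarrow> real"
  shows "\<bar>\<Sum>i\<in>I. f i * g i\<bar> \<le> sqrt (\<Sum>i\<in>I. (f i)\<^sup>2) * sqrt (\<Sum>i\<in>I. (g i)\<^sup>2)"
proof -
  have "\<bar>\<Sum>i\<in>I. f i * g i\<bar> \<le> (\<Sum>i\<in>I. \<bar>f i\<bar> * \<bar>g i\<bar>)"
    using sum_abs[of "\<lambda>i. f i * g i" I] by (simp add: abs_mult)
  also have "\<dots> \<le> L2_set f I * L2_set g I" by (rule L2_set_mult_ineq)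
  finally show ?thesis by (simp add: L2_set_def)
qed

lemma opnorm_bdd:
  fixes M :: nat and A :: "nat \<Rightarrow> nat \<Rightarrow> real"
  shows   "bdd_above {sqrt (\<Sum>i<M. (\<Sum>j<M. A i j * x j)\<^sup>2) | x. (\<Sum>j<M. (x j)\<^sup>2) \<le> (1::real)}"
proof (rule bdd_aboveI)
  fix v assume "v \<in> {sqrt (\<Sum>i<M. (\<Sum>j<M. A i j * x j)\<^sup>2) | x. (\<Sum>j<M. (x j)\<^sup>2) \<le> (1::real)}"
  then obtain x where v: "v = sqrt (\<Sum>i<M. (\<Sum>j<M. A i j * x j)\<^sup>2)" and x: "(\<Sum>j<M. (x j)\<^sup>2) \<le> 1" by blast
  have xj: "\<bar>x j\<bar> \<le> 1" if "j < M" for j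
  proof -
    have "(x j)\<^sup>2 \<le> (\<Sum>j<M. (x j)\<^sup>2)"
      using that by (intro member_le_sum) auto
    then have "(x j)\<^sup>2 \<le> 1\<^sup>2" using x by simp
    then show ?thesis using abs_le_square_iff by (metis abs_one)
  qed
  have r: "\<bar>\<Sum>j<M. A i j * x j\<bar> \<le> (\<Sum>j<M. \<bar>A i j\<bar>)" for i
  proof -
    have "\<bar>\<Sum>j<M. A i j * x j\<bar> \<le> (\<Sum>j<M. \<bar>A i j * x j\<bar>)" by (rule sum_abs)
    also have "\<dots> \<le> (\<Sum>j<M. \<bar>A i j\<bar>)"
      using xj by (intro sum_mono) (auto simp: abs_mult intro: mult_left_le)
    finally show ?thesis .
  qed
  have "(\<Sum>j<M. A i j * x j)\<^sup>2 \<le> (\<Sum>j<M. \<bar>A i j\<bar>)\<^sup>2" for i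
    using r[of i] by (metis abs_le_square_iff abs_of_nonneg sum_nonneg abs_ge_zero)
  then show "v \<le> sqrt (\<Sum>i<M. (\<Sum>j<M. \<bar>A i j\<bar>)\<^sup>2)"
    unfolding v by (intro real_sqrt_le_mono sum_mono) auto
qed

lemma opnorm_nonneg: "l2_opnorm M A \<ge> 0"
proof -
  have "sqrt (\<Sum>i<M. (\<Sum>j<M. A i j * (\<lambda>_. 0::real) j)\<^sup>2) \<le> l2_opnorm M A"
    unfolding l2_opnorm_def apply (rule cSup_upper[OF _ opnorm_bdd]) apply (rule CollectI)
    apply (rule exI[of _ "\<lambda>_. 0"]) by simp
  then show ?thesis by simp
qed

lemma opnorm_bound:
  fixes x :: "nat \<Rightarrow> real"
  shows "sqrt (\<Sum>i<M. (\<Sum>j<M. A i j * x j)\<^sup>2) \<le> l2_opnorm M A * sqrt (\<Sum>j<M. (x j)\<^sup>2)"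
proof (cases "(\<Sum>j<M. (x j)\<^sup>2) = 0")
  case True
  then have "x j = 0" if "j < M" for j using that by (simp add: sum_nonneg_eq_0_iff)
  then show ?thesis using True by simp
next
  case False
  define q where "q = sqrt (\<Sum>j<M. (x j)\<^sup>2)"
  have q: "q > 0" using False unfolding q_def by (simp add: sum_nonneg order_le_neq_trans)
  define x' where "x' j = x j / q" for j
  have "(\<Sum>j<M. (x' j)\<^sup>2) = (\<Sum>j<M. (x j)\<^sup>2) / q\<^sup>2"
    unfolding x'_def by (simp add: power_divide sum_divide_distrib)
  also have "\<dots> = 1" using q False unfolding q_def by (simp add: sum_nonneg)
  finally have "sqrt (\<Sum>i<M. (\<Sum>j<M. A i j * x' j)\<^sup>2) \<le> l2_opnorm M A"
    unfolding l2_opnorm_def by (intro cSup_upper[OF _ opnorm_bdd]) auto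
  moreover have "(\<Sum>i<M. (\<Sum>j<M. A i j * x' j)\<^sup>2) = (\<Sum>i<M. (\<Sum>j<M. A i j * x j)\<^sup>2) / q\<^sup>2"
    unfolding x'_def by (simp add: power_divide sum_divide_distrib[symmetric])
  ultimately have "sqrt (\<Sum>i<M. (\<Sum>j<M. A i j * x j)\<^sup>2) / q \<le> l2_opnorm M A"
    using q by (simp add: real_sqrt_divide)
  then show ?thesis using q unfolding q_def[symmetric] by (simp add: divide_le_eq)
qed

lemma core:
  fixes U :: "nat \<Rightarrow> nat \<Rightarrow> real" and a :: "nat \<Rightarrow> real" and N M :: nat
  defines "G \<equiv> \<lambda>j k. \<Sum>n<N. U n j * U n k"
  defines "y \<equiv> \<lambda>j. \<Sum>n<N. a n * U n j"
  shows "(\<Sum>j<M. (y j)\<^sup>2) \<le> (\<Sum>n<N. (a n)\<^sup>2) * (1 + l2_opnorm M (\<lambda>i j. (if i = j then 1 else 0) - G i j))"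
proof -
  define E where "E = l2_opnorm M (\<lambda>i j. (if i = j then 1 else 0) - G i j)"
  define Y where "Y = (\<Sum>j<M. (y j)\<^sup>2)"
  define A where "A = (\<Sum>n<N. (a n)\<^sup>2)"
  define Uy where "Uy n = (\<Sum>j<M. U n j * y j)" for n
  define B where "B = (\<Sum>n<N. (Uy n)\<^sup>2)"
  define w where "w j = (\<Sum>k<M. ((if j = k then 1 else 0) - G j k) * y k)" for j
  have E0: "E \<ge> 0" unfolding E_def by (rule opnorm_nonneg)
  have Y0: "Y \<ge> 0" unfolding Y_def by (simp add: sum_nonneg)
  have A0: "A \<ge> 0" unfolding A_def by (simp add: sum_nonneg)
  have B0: "B \<ge> 0" unfolding B_def by (simp add: sum_nonneg)
  have 1: "Y = (\<Sum>n<N. a n * Uy n)"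
    unfolding Y_def Uy_def y_def power2_eq_square
    by (simp add: sum_distrib_left sum_distrib_right mult_ac sum.swap[of _ "{..<M}" "{..<N}"])
  have 2: "Y \<le> sqrt A * sqrt B"
    using cs_sum[of a Uy "{..<N}"] unfolding 1 A_def B_def by simp
  have w1: "w j = y j - (\<Sum>k<M. G j k * y k)" if "j < M" for j
  proof -
    have "w j = (\<Sum>k<M. (if j = k then y k else 0)) - (\<Sum>k<M. G j k * y k)"
      unfolding w_def sum_subtractf[symmetric] by (intro sum.cong) (auto simp: algebra_simps)
    also have "(\<Sum>k<M. (if j = k then y k else 0)) = y j" using that by (simp add: sum.delta)
    finally show ?thesis .
  qed
  have 3: "B = Y - (\<Sum>j<M. y j * w j)"
  proof -
    have "B = (\<Sum>j<M. \<Sum>k<M. y j * G j k * y k)"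
      unfolding B_def Uy_def G_def power2_eq_square
      by (simp add: sum_product sum_distrib_left sum_distrib_right mult_ac
          sum.swap[of _ "{..<M}" "{..<N}"])
    moreover have "(\<Sum>j<M. y j * w j) = Y - (\<Sum>j<M. \<Sum>k<M. y j * G j k * y k)"
      unfolding Y_def power2_eq_square
      by (simp add: w1 right_diff_distrib sum_subtractf sum_distrib_left mult_ac)
    ultimately show ?thesis by simp
  qed
  have 4: "\<bar>\<Sum>j<M. y j * w j\<bar> \<le> E * Y"
  proof -
    have "\<bar>\<Sum>j<M. y j * w j\<bar> \<le> sqrt Y * sqrt (\<Sum>j<M. (w j)\<^sup>2)"
      using cs_sum[of y w "{..<M}"] unfolding Y_def by simp
    also have "sqrt (\<Sum>j<M. (w j)\<^sup>2) \<le> E * sqrt Y"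
      unfolding w_def E_def Y_def by (rule opnorm_bound)
    then have "sqrt Y * sqrt (\<Sum>j<M. (w j)\<^sup>2) \<le> sqrt Y * (E * sqrt Y)"
      using Y0 by (intro mult_left_mono) auto
    also have "\<dots> = E * Y" using Y0 by (simp add: mult_ac)
    finally show ?thesis .
  qed
  have 5: "B \<le> (1 + E) * Y" using 3 4 by (simp add: algebra_simps)
  have "Y * Y \<le> A * B"
  proof -
    have "Y * Y \<le> (sqrt A * sqrt B) * (sqrt A * sqrt B)"
      using 2 Y0 by (intro mult_mono) auto
    also have "\<dots> = A * B" using A0 B0 by (simp add: mult_ac)
    finally show ?thesis .
  qed
  also have "\<dots> \<le> A * ((1 + E) * Y)" using 5 A0 by (intro mult_left_mono)
  finally have "Y * Y \<le> (A * (1 + E)) * Y" by (simp add: mult_ac)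
  then have "Y \<le> A * (1 + E)"
    using Y0 by (cases "Y = 0") (use A0 E0 in auto)
  then show ?thesis unfolding Y_def A_def E_def .
qed

lemma hyper_eq:
  fixes a b :: "'a::euclidean_space"
  shows "{s. dist s a = dist s b} = {s. (2 *\<^sub>R (b - a)) \<bullet> s = b \<bullet> b - a \<bullet> a}"
proof -
  have "dist s a = dist s b \<longleftrightarrow> (2 *\<^sub>R (b - a)) \<bullet> s = b \<bullet> b - a \<bullet> a" for s
  proof -
    have "dist s a = dist s b \<longleftrightarrow> (dist s a)^2 = (dist s b)^2"
      by (metis zero_le_dist power2_eq_imp_eq)
    also have "\<dots> \<longleftrightarrow> (s - a) \<bullet> (s - a) = (s - b) \<bullet> (s - b)"
      by (simp add: dist_norm power2_norm_eq_inner)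
    also have "\<dots> \<longleftrightarrow> (2 *\<^sub>R (b - a)) \<bullet> s = b \<bullet> b - a \<bullet> a"
      by (auto simp: inner_diff_left inner_diff_right inner_commute algebra_simps)
    finally show ?thesis .
  qed
  then show ?thesis by auto
qed

lemma hyper_null:
  fixes a b :: "'a::euclidean_space"
  assumes "a \<noteq> b"
  shows "{s. dist s a = dist s b} \<in> null_sets lebesgue"
  unfolding hyper_eq negligible_iff_null_sets[symmetric]
  using assms by (intro negligible_hyperplane) auto

lemma quad_sum:
  fixes D :: "'a::euclidean_space set" and \<nu> :: "'a \<Rightarrow> real" and t :: "nat \<Rightarrow> 'a"
  assumes oD: "open D" and nn: "\<And>s. s\<in>D \<Longrightarrow> \<nu> s \<ge> 0"
    and iD: "set_integrable lebesgue D \<nu>" and one: "(LINT s:D|lebesgue. \<nu> s) = 1"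
    and inj: "inj_on t {..<N}"
  shows "(\<Sum>n<N. quad_weight D \<nu> t N n) \<le> 1"
    and "\<And>n. quad_weight D \<nu> t N n \<ge> 0"
proof -
  define V where "V n = voronoi_cell D t N n" for n
  define C where "C n = (\<Inter>m\<in>{m. m<N \<and> m \<noteq> n}. {s. dist s (t n) \<le> dist s (t m)})" for n
  have VC: "V n = D \<inter> C n" for n by (auto simp: V_def C_def voronoi_cell_def)
  have "closed (C n)" for n unfolding C_def
    by (intro closed_INT ballI closed_Collect_le continuous_intros)
  hence Vs: "V n \<in> sets lebesgue" for n unfolding VC
    using oD by (intro sets.Int) (simp_all add: borel_closed borel_open sets_completionI_sets)
  have VD: "V n \<subseteq> D" for n unfolding VC by auto
  have iV: "set_integrable lebesgue (V n) \<nu>" for n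
    using set_integrable_subset[OF iD Vs VD] .
  show "quad_weight D \<nu> t N n \<ge> 0" for n
    unfolding quad_weight_def V_def[symmetric] set_lebesgue_integral_def
    using nn VD by (intro integral_nonneg_AE AE_I2) (auto simp: indicator_def)
  define Z where "Z = (\<Union>n\<in>{..<N}. \<Union>m\<in>{m. m<N \<and> m \<noteq> n}. {s. dist s (t n) = dist s (t m)})"
  have Z: "Z \<in> null_sets lebesgue" unfolding Z_def
  proof (intro null_sets.finite_UN)
    fix n m assume "n \<in> {..<N}" "m \<in> {m. m<N \<and> m \<noteq> n}"
    then have "t n \<noteq> t m" using inj by (auto dest: inj_onD)
    then show "{s. dist s (t n) = dist s (t m)} \<in> null_sets lebesgue" by (rule hyper_null)
  qed auto
  have pt: "(\<Sum>n<N. indicator (V n) s *\<^sub>R \<nu> s) \<le> indicator D s *\<^sub>R \<nu> s" if "s \<notin> Z" for s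
  proof (cases "\<exists>n<N. s \<in> V n")
    case False
    then have "(\<Sum>n<N. indicator (V n) s *\<^sub>R \<nu> s) = 0" by (intro sum.neutral) (auto simp: indicator_def)
    moreover have "indicator D s *\<^sub>R \<nu> s \<ge> 0" using nn by (auto simp: indicator_def)
    ultimately show ?thesis by linarith
  next
    case True
    then obtain n where n: "n < N" "s \<in> V n" by auto
    have oth: "s \<notin> V m" if "m < N" "m \<noteq> n" for m
    proof
      assume "s \<in> V m"
      then have "dist s (t m) \<le> dist s (t n)" using n that by (auto simp: V_def voronoi_cell_def)
      moreover have "dist s (t n) \<le> dist s (t m)" using n that by (auto simp: V_def voronoi_cell_def)
      ultimately have "s \<in> Z" unfolding Z_def using n that by auto
      then show False using \<open>s \<notin> Z\<close> by simp
    qed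
    have "(\<Sum>n<N. indicator (V n) s *\<^sub>R \<nu> s) = indicator (V n) s *\<^sub>R \<nu> s + (\<Sum>m\<in>{..<N}-{n}. indicator (V m) s *\<^sub>R \<nu> s)"
      using n by (subst sum.remove[of _ n]) auto
    also have "(\<Sum>m\<in>{..<N}-{n}. indicator (V m) s *\<^sub>R \<nu> s) = 0"
      using oth by (intro sum.neutral) auto
    finally show ?thesis using n VD[of n] by (auto simp: indicator_def)
  qed
  have AE: "AE s in lebesgue. (\<Sum>n<N. indicator (V n) s *\<^sub>R \<nu> s) \<le> indicator D s *\<^sub>R \<nu> s"
    by (rule AE_I'[OF Z]) (use pt in auto)
  have isum: "integrable lebesgue (\<lambda>s. \<Sum>n<N. indicator (V n) s *\<^sub>R \<nu> s)"
    by (rule Bochner_Integration.integrable_sum) (use iV in \<open>auto simp: set_integrable_def\<close>)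
  have "(\<Sum>n<N. quad_weight D \<nu> t N n) = (\<Sum>n<N. integral\<^sup>L lebesgue (\<lambda>s. indicator (V n) s *\<^sub>R \<nu> s))"
    unfolding quad_weight_def V_def set_lebesgue_integral_def ..
  also have "\<dots> = integral\<^sup>L lebesgue (\<lambda>s. \<Sum>n<N. indicator (V n) s *\<^sub>R \<nu> s)"
    using iV unfolding set_integrable_def by (subst Bochner_Integration.integral_sum[where I="{..<N}" and M=lebesgue and f="\<lambda>n s. indicator (V n) s *\<^sub>R \<nu> s"]) auto
  also have "\<dots> \<le> integral\<^sup>L lebesgue (\<lambda>s. indicator D s *\<^sub>R \<nu> s)"
    by (rule integral_mono_AE[OF isum _ AE]) (use iD in \<open>simp add: set_integrable_def\<close>)
  also have "\<dots> = 1" using one unfolding set_lebesgue_integral_def .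
  finally show "(\<Sum>n<N. quad_weight D \<nu> t N n) \<le> 1" .
qed

theorem lemma5p4:
  fixes D :: "'a::euclidean_space set" and \<nu> :: "'a \<Rightarrow> real"
    and \<phi> :: "nat \<Rightarrow> 'a \<Rightarrow> real" and t :: "nat \<Rightarrow> 'a"
    and N M R :: nat and z w :: "nat \<Rightarrow> real"
  assumes "open D" and "connected D"
    and "\<And>s. s \<in> D \<Longrightarrow> \<nu> s \<ge> 0"
    and "set_integrable lebesgue D \<nu>"
    and "(LINT s:D|lebesgue. \<nu> s) = 1"
    and "\<And>i j. set_integrable lebesgue D (\<lambda>s. \<nu> s * \<phi> i s * \<phi> j s)"
    and "\<And>i j. (LINT s:D|lebesgue. \<nu> s * \<phi> i s * \<phi> j s) = (if i = j then 1 else 0)"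
    and "\<And>i. bounded (\<phi> i ` closure D)"
    and "\<And>n. n < N \<Longrightarrow> t n \<in> closure D"
    and "inj_on t {..<N}"
    and "\<And>i. z i \<ge> 1"
    and "\<And>i. w i = z i * linf_norm D (\<phi> i)"
  shows "Ferr D \<nu> \<phi> t N w M R
           \<le> ereal (sqrt (real M) * sqrt (1 + Eerr D \<nu> \<phi> t N M) / (INF i\<in>{R..}. z i))"
proof -
  note A = assms
  define C where "C = sqrt (real M) * sqrt (1 + Eerr D \<nu> \<phi> t N M)"
  define Ez where "Ez = (INF i\<in>{R..}. z i)"
  define L where "L i = linf_norm D (\<phi> i)" for i
  define tau where "tau n = quad_weight D \<nu> t N n" for n
  have bddz: "bdd_below (z ` {R..})" using A(11) by (intro bdd_belowI2) auto
  have Ez1: "Ez \<ge> 1" unfolding Ez_def using A(11) by (intro cINF_greatest) auto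
  have Ezle: "Ez \<le> z i" if "i \<ge> R" for i unfolding Ez_def using that by (intro cINF_lower bddz) auto
  have E2nn: "E2 D \<nu> \<phi> t N M \<ge> 0" unfolding E2_def by (rule opnorm_nonneg)
  have E2le: "E2 D \<nu> \<phi> t N M \<le> Eerr D \<nu> \<phi> t N M" unfolding Eerr_def by simp
  have C0: "C \<ge> 0" unfolding C_def using E2nn E2le by simp
  have Dne: "D \<noteq> {}"
  proof
    assume "D = {}"
    then have "(LINT s:D|lebesgue. \<nu> s) = 0" by (simp add: set_lebesgue_integral_def)
    then show False using A(5) by simp
  qed
  have phib: "\<bar>\<phi> i s\<bar> \<le> L i" if "s \<in> closure D" for i s
  proof -
    obtain B where B: "\<And>x. x \<in> \<phi> i ` closure D \<Longrightarrow> norm x \<le> B"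
      using A(8)[of i] unfolding bounded_iff by blast
    have "bdd_above ((\<lambda>s. \<bar>\<phi> i s\<bar>) ` closure D)"
      using B by (intro bdd_aboveI2[where M=B]) auto
    then show ?thesis unfolding L_def linf_norm_def using that by (intro cSUP_upper) auto
  qed
  have L0: "L i \<ge> 0" for i
  proof -
    obtain s where "s \<in> D" using Dne by auto
    then have "s \<in> closure D" using closure_subset by blast
    then show ?thesis using phib[of s i] by linarith
  qed
  have tau0: "tau n \<ge> 0" for n unfolding tau_def using quad_sum(2)[OF A(1) A(3) A(4) A(5) A(10)] .
  have tau1: "(\<Sum>n<N. tau n) \<le> 1" unfolding tau_def using quad_sum(1)[OF A(1) A(3) A(4) A(5) A(10)] .
  have key: "(\<Sum>j<M. \<bar>gram D \<nu> \<phi> t N i j / w i\<bar>) \<le> C / Ez" if "i \<in> {R..}" for i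
  proof -
    define a where "a n = Umat D \<nu> \<phi> t N n i" for n
    have gs: "(\<Sum>j<M. (gram D \<nu> \<phi> t N i j)\<^sup>2) \<le> (\<Sum>n<N. (a n)\<^sup>2) * (1 + E2 D \<nu> \<phi> t N M)"
      using core[of a "\<lambda>n j. Umat D \<nu> \<phi> t N n j" N M] unfolding a_def gram_def E2_def by simp
    have "(\<Sum>n<N. (a n)\<^sup>2) = (\<Sum>n<N. tau n * (\<phi> i (t n))\<^sup>2)"
      unfolding a_def Umat_def tau_def using tau0 unfolding tau_def
      by (intro sum.cong) (auto simp: power_mult_distrib)
    also have "\<dots> \<le> (\<Sum>n<N. tau n * (L i)\<^sup>2)"
    proof (intro sum_mono mult_left_mono tau0)
      fix n assume "n \<in> {..<N}"
      then have "\<bar>\<phi> i (t n)\<bar> \<le> L i" using phib A(9) by auto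
      then show "(\<phi> i (t n))\<^sup>2 \<le> (L i)\<^sup>2" by (metis abs_le_square_iff L0 abs_of_nonneg)
    qed
    also have "\<dots> = (L i)\<^sup>2 * (\<Sum>n<N. tau n)" by (simp add: sum_distrib_right mult_ac)
    also have "\<dots> \<le> (L i)\<^sup>2" using tau1 by (simp add: mult_left_le)
    finally have aL: "(\<Sum>n<N. (a n)\<^sup>2) \<le> (L i)\<^sup>2" .
    have "(\<Sum>j<M. (gram D \<nu> \<phi> t N i j)\<^sup>2) \<le> (L i)\<^sup>2 * (1 + E2 D \<nu> \<phi> t N M)"
      using gs aL E2nn by (meson add_nonneg_nonneg mult_right_mono order_trans zero_le_one)
    also have "\<dots> \<le> (L i)\<^sup>2 * (1 + Eerr D \<nu> \<phi> t N M)" using E2le by (intro mult_left_mono) auto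
    finally have g2: "(\<Sum>j<M. (gram D \<nu> \<phi> t N i j)\<^sup>2) \<le> (L i)\<^sup>2 * (1 + Eerr D \<nu> \<phi> t N M)" .
    have "(\<Sum>j<M. \<bar>gram D \<nu> \<phi> t N i j\<bar>) \<le> sqrt (real M) * sqrt (\<Sum>j<M. (gram D \<nu> \<phi> t N i j)\<^sup>2)"
      using cs_sum[of "\<lambda>_. 1" "\<lambda>j. \<bar>gram D \<nu> \<phi> t N i j\<bar>" "{..<M}"] by simp
    also have "\<dots> \<le> sqrt (real M) * sqrt ((L i)\<^sup>2 * (1 + Eerr D \<nu> \<phi> t N M))"
      using g2 by (intro mult_left_mono real_sqrt_le_mono) auto
    also have "\<dots> = L i * C" unfolding C_def using L0[of i] by (simp add: real_sqrt_mult mult_ac)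
    finally have sg: "(\<Sum>j<M. \<bar>gram D \<nu> \<phi> t N i j\<bar>) \<le> L i * C" .
    have CE: "C / Ez \<ge> 0" using C0 Ez1 by simp
    show ?thesis
    proof (cases "L i = 0")
      case True
      then have "w i = 0" using A(12)[of i] unfolding L_def by simp
      then show ?thesis using CE by simp
    next
      case False
      then have Lp: "L i > 0" using L0[of i] by simp
      have zi: "z i \<ge> 1" using A(11) by simp
      have wi: "w i = z i * L i" using A(12) unfolding L_def by simp
      have wp: "w i > 0" using Lp zi wi by simp
      have "(\<Sum>j<M. \<bar>gram D \<nu> \<phi> t N i j / w i\<bar>) = (\<Sum>j<M. \<bar>gram D \<nu> \<phi> t N i j\<bar>) / w i"
        using wp by (simp add: sum_divide_distrib)
      also have "\<dots> \<le> (L i * C) / w i" using sg wp by (simp add: divide_right_mono)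
      also have "\<dots> = C / z i" using wi Lp by simp
      also have "\<dots> \<le> C / Ez" using C0 Ez1 Ezle[of i] that by (intro divide_left_mono) auto
      finally show ?thesis .
    qed
  qed
  show ?thesis unfolding Ferr_def C_def[symmetric] Ez_def[symmetric]
    using key by (intro SUP_least) simp
qed

end
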